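(* Let $A_i\in\mathbb R^{d\times d}$, $i\in\mathbb N$, be matrices such that $\|A_i\|\le A^*<\infty$ for all $i$, $\sup_{i\in\mathbb N}\rho(A_i)=\rho_0<1$, and for some $p\ge1$ $$\|A\|_{p\text{-var}}=\Big(\sup_{1\le i_1<i_2<\cdots}\sum_{k=1}^\infty\|A_{i_{k+1}}-A_{i_k}\|^p\Big)^{1/p}\le A^*.$$ Then for every $\rho>\rho_0$ there exists $K=K(\rho,\rho_0,A^* )$ such that $\big\|\prod_{i=s+1}^tA_i\big\|\le K\rho^{t-s}$ for all integers $0\le s<t$.
   Context: $\|\cdot\|$ denotes the Euclidean operator norm and $\rho(A)$ the spectral radius (maximal modulus of the complex eigenvalues) of a matrix $A$. *)

theory Defs
  imports "HOL-Analysis.Analysis"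
begin

definition mnorm :: "real^'n^'n \<Rightarrow> real" where
  "mnorm A = onorm (\<lambda>x. A *v x)"

definition cmat :: "real^'n^'n \<Rightarrow> complex^'n^'n" where
  "cmat A = (\<chi> i j. complex_of_real (A $ i $ j))"

definition ceigenvalues :: "real^'n^'n \<Rightarrow> complex set" where
  "ceigenvalues A = {z. \<exists>v. v \<noteq> 0 \<and> cmat A *v v = z *s v}"

definition spec_rad :: "real^'n^'n \<Rightarrow> real" where
  "spec_rad A = Max (cmod ` ceigenvalues A)"

text \<open>Ordered product A_t ... A_{s+1} (here with t = s + k).\<close>
fun mprod :: "(nat \<Rightarrow> real^'n^'n) \<Rightarrow> nat \<Rightarrow> nat \<Rightarrow> real^'n^'n" where
  "mprod A s 0 = mat 1"
| "mprod A s (Suc k) = A (s + Suc k) ** mprod A s k"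

definition pvar :: "real \<Rightarrow> (nat \<Rightarrow> real^'n^'n) \<Rightarrow> ereal" where
  "pvar p A = (let S = (SUP \<iota>\<in>{\<iota>. strict_mono \<iota> \<and> \<iota> 0 \<ge> 1}.
       (\<Sum>k. ennreal (mnorm (A (\<iota> (Suc k)) - A (\<iota> k)) powr p)))
     in if S = \<infinity> then \<infinity> else ereal (enn2real S powr (1/p)))"

end

theory Submission
  imports Defs "Jordan_Normal_Form.Spectral_Radius"
begin


no_notation Matrix.vec_index (infixl "$" 100)
hide_const (open) Matrix.mat

lemma bl_mv: "bounded_linear (\<lambda>x. (B::real^'n^'n) *v x)"
  by (rule matrix_vector_mul_bounded_linear)

lemma mnorm_ge0: "0 \<le> mnorm B"
  unfolding mnorm_def by (rule onorm_pos_le[OF bl_mv])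

lemma mnorm_mult: "mnorm (A ** B) \<le> mnorm A * mnorm (B::real^'n^'n)"
proof -
  have "(\<lambda>x. (A ** B) *v x) = (\<lambda>x. A *v x) \<circ> (\<lambda>x. B *v x)"
    by (auto simp: matrix_vector_mul_assoc)
  then show ?thesis unfolding mnorm_def using onorm_compose[OF bl_mv bl_mv] by simp
qed

lemma mnorm_add: "mnorm (A + B) \<le> mnorm A + mnorm (B::real^'n^'n)"
proof -
  have "(\<lambda>x. (A + B) *v x) = (\<lambda>x. A *v x + B *v x)"
    by (auto simp: matrix_vector_mult_add_rdistrib)
  then show ?thesis unfolding mnorm_def using onorm_triangle[OF bl_mv bl_mv] by simp
qed

lemma mnorm_one: "mnorm (mat 1 :: real^'n^'n) \<le> 1"
proof -
  have e: "((*v) (mat 1 :: real^'n^'n)) = (\<lambda>x. x)" by (rule ext) (simp add: matrix_vector_mul_lid)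
  show ?thesis unfolding mnorm_def e by (rule onorm_id_le)
qed

lemma mnorm_entry: fixes B :: "real^'n^'n" shows "\<bar>(B $ i) $ j\<bar> \<le> mnorm B"
proof -
  have "(B *v axis j 1) $ i = (B $ i) $ j"
    by (simp add: matrix_vector_mult_def axis_def if_distrib cong: if_cong)
  then have "\<bar>(B $ i) $ j\<bar> \<le> norm (B *v axis j 1)"
    by (metis component_le_norm_cart)
  also have "\<dots> \<le> mnorm B * norm (axis j (1::real))"
    unfolding mnorm_def by (rule onorm[OF bl_mv])
  finally show ?thesis by simp
qed

lemma mnorm_le_sum: fixes B :: "real^'n^'n" shows "mnorm B \<le> (\<Sum>i\<in>UNIV. \<Sum>j\<in>UNIV. \<bar>(B $ i) $ j\<bar>)"
  unfolding mnorm_def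
proof (rule onorm_le)
  fix x :: "real^'n"
  have "norm (B *v x) \<le> (\<Sum>i\<in>UNIV. \<bar>(B *v x) $ i\<bar>)" by (rule norm_le_l1_cart)
  also have "\<dots> \<le> (\<Sum>i\<in>UNIV. (\<Sum>j\<in>UNIV. \<bar>(B $ i) $ j\<bar>) * norm x)"
  proof (rule sum_mono)
    fix i
    have "\<bar>(B *v x) $ i\<bar> = \<bar>\<Sum>j\<in>UNIV. (B $ i) $ j * x $ j\<bar>"
      by (simp add: matrix_vector_mult_def)
    also have "\<dots> \<le> (\<Sum>j\<in>UNIV. \<bar>(B $ i) $ j\<bar> * \<bar>x $ j\<bar>)"
      by (metis (no_types, lifting) abs_mult sum_abs sum.cong)
    also have "\<dots> \<le> (\<Sum>j\<in>UNIV. \<bar>(B $ i) $ j\<bar> * norm x)"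
      by (intro sum_mono mult_left_mono component_le_norm_cart) auto
    finally show "\<bar>(B *v x) $ i\<bar> \<le> (\<Sum>j\<in>UNIV. \<bar>(B $ i) $ j\<bar>) * norm x"
      by (simp add: sum_distrib_right)
  qed
  also have "\<dots> = (\<Sum>i\<in>UNIV. \<Sum>j\<in>UNIV. \<bar>(B $ i) $ j\<bar>) * norm x"
    by (simp add: sum_distrib_right)
  finally show "norm (B *v x) \<le> (\<Sum>i\<in>UNIV. \<Sum>j\<in>UNIV. \<bar>(B $ i) $ j\<bar>) * norm x" .
qed

lemma matrix_sub_ldistrib': "(A::real^'n^'n) ** (B - C) = A ** B - A ** C"
  by (metis (no_types) diff_add_cancel matrix_add_ldistrib add_diff_cancel)

lemma matrix_add_rdistrib': "((B::real^'n^'n) + C) ** A = B ** A + C ** A"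
  by (vector matrix_matrix_mult_def sum.distrib[symmetric] field_simps)

lemma matrix_sub_rdistrib': "((B::real^'n^'n) - C) ** A = B ** A - C ** A"
  by (metis (no_types) diff_add_cancel matrix_add_rdistrib' add_diff_cancel)

fun mpow :: "real^'n^'n \<Rightarrow> nat \<Rightarrow> real^'n^'n" where
  "mpow B 0 = mat 1"
| "mpow B (Suc m) = B ** mpow B m"

lemma mpow_Suc': "mpow B (Suc m) = mpow B m ** B"
  by (induction m) (simp_all add: matrix_mul_assoc)

lemma mprod_split: "mprod A s (a + b) = mprod A (s + a) b ** mprod A s a"
  by (induction b) (simp_all add: matrix_mul_assoc add.assoc)

lemma perturb:
  fixes B :: "real^'n^'n"
  assumes C: "\<forall>m. mnorm (mpow B m) \<le> C * r1^m" and r1: "0 \<le> r1" and eps: "0 \<le> eps"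
    and E: "\<forall>j. 1 \<le> j \<and> j \<le> k \<longrightarrow> mnorm (A (s + j) - B) \<le> eps"
  shows "mnorm (mprod A s k) \<le> C * (r1 + C*eps)^k"
  using E
proof (induction k rule: less_induct)
  case (less k)
  define r where "r = r1 + C*eps"
  have C0: "0 \<le> C" using C[rule_format, of 0] mnorm_one mnorm_ge0[of "mat 1 :: real^'n^'n"]
    by simp
  have r0: "0 \<le> r" unfolding r_def using C0 r1 eps by simp
  have IH: "mnorm (mprod A s j) \<le> C * r^j" if "j < k" for j
    using less.IH[OF that] less.prems that unfolding r_def by auto
  have main: "j \<le> k \<Longrightarrow> mnorm (mpow B (k - j) ** mprod A s j) \<le> C * r1^(k-j) * r^j" for j
  proof (induction j)
    case 0
    then show ?case using C by simp
  next
    case (Suc j)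
    define q where "q = k - Suc j"
    have kj: "k - j = Suc q" using Suc.prems unfolding q_def by simp
    have eq: "mpow B (k - Suc j) ** mprod A s (Suc j)
        = mpow B (k - j) ** mprod A s j + mpow B q ** ((A (s + Suc j) - B) ** mprod A s j)"
      unfolding kj mpow_Suc' q_def[symmetric]
      by (simp add: matrix_sub_ldistrib' matrix_sub_rdistrib' matrix_mul_assoc)
    have "mnorm (mpow B q ** ((A (s + Suc j) - B) ** mprod A s j))
        \<le> mnorm (mpow B q) * (mnorm (A (s + Suc j) - B) * mnorm (mprod A s j))"
      by (meson mnorm_mult mnorm_ge0 order_trans mult_left_mono)
    also have "\<dots> \<le> (C * r1^q) * (eps * (C * r^j))"
      using Suc.prems less.prems IH[of j] C
      by (intro mult_mono mnorm_ge0 mult_nonneg_nonneg) (auto simp: C0 r1 eps r0)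
    finally have t2: "mnorm (mpow B q ** ((A (s + Suc j) - B) ** mprod A s j)) \<le> (C * r1^q) * (eps * (C * r^j))" .
    have t1: "mnorm (mpow B (k - j) ** mprod A s j) \<le> C * r1^(k-j) * r^j"
      using Suc by simp
    have "mnorm (mpow B (k - Suc j) ** mprod A s (Suc j)) \<le> C * r1^(k-j) * r^j + (C * r1^q) * (eps * (C * r^j))"
      unfolding eq using t1 t2 mnorm_add by (meson add_mono order_trans)
    also have "\<dots> = C * r1^q * r^j * r" unfolding kj r_def by (simp add: algebra_simps)
    finally show ?case unfolding q_def by (simp add: mult_ac)
  qed
  show ?case using main[of k] by (simp add: r_def matrix_mul_lid)
qed



definition Nm :: "complex Matrix.mat \<Rightarrow> real" where
  "Nm X = (\<Sum>i=0..<dim_row X. \<Sum>j=0..<dim_col X. cmod (X $$ (i,j)))"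

lemma Nm_ge0: "0 \<le> Nm X" unfolding Nm_def by (intro sum_nonneg) auto

lemma Nm_add: assumes "X \<in> carrier_mat n m" "Y \<in> carrier_mat n m"
  shows "Nm (X + Y) \<le> Nm X + Nm Y"
proof -
  have "Nm (X + Y) = (\<Sum>i=0..<n. \<Sum>j=0..<m. cmod (X $$ (i,j) + Y $$ (i,j)))"
    using assms unfolding Nm_def by (auto intro!: sum.cong)
  also have "\<dots> \<le> (\<Sum>i=0..<n. \<Sum>j=0..<m. cmod (X $$ (i,j)) + cmod (Y $$ (i,j)))"
    by (intro sum_mono norm_triangle_ineq)
  also have "\<dots> = Nm X + Nm Y" using assms unfolding Nm_def by (simp add: sum.distrib)
  finally show ?thesis .
qed

lemma Nm_smult: "Nm (c \<cdot>\<^sub>m X) = cmod c * Nm X"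
  unfolding Nm_def by (simp add: norm_mult sum_distrib_left)

lemma Nm_mult: assumes X: "X \<in> carrier_mat n n" and Y: "Y \<in> carrier_mat n n"
  shows "Nm (X * Y) \<le> Nm X * Nm Y"
proof -
  have e: "(X*Y)$$(i,j) = (\<Sum>l=0..<n. X$$(i,l) * Y$$(l,j))" if "i<n" "j<n" for i j
    using assms that by (auto simp: scalar_prod_def intro!: sum.cong)
  have rowb: "(\<Sum>j=0..<n. cmod (Y$$(l,j))) \<le> Nm Y" if "l < n" for l
  proof -
    have "(\<Sum>j=0..<n. cmod (Y$$(l,j))) \<le> (\<Sum>l'=0..<n. \<Sum>j=0..<n. cmod (Y$$(l',j)))"
      by (rule member_le_sum[where f="\<lambda>l'. \<Sum>j=0..<n. cmod (Y$$(l',j))"]) (use that in \<open>auto intro: sum_nonneg\<close>)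
    then show ?thesis using Y unfolding Nm_def by simp
  qed
  have "Nm (X*Y) = (\<Sum>i=0..<n. \<Sum>j=0..<n. cmod ((X*Y)$$(i,j)))"
    using assms unfolding Nm_def by simp
  also have "\<dots> = (\<Sum>i=0..<n. \<Sum>j=0..<n. cmod (\<Sum>l=0..<n. X$$(i,l) * Y$$(l,j)))"
    by (intro sum.cong refl) (simp add: e del: index_mult_mat)
  also have "\<dots> \<le> (\<Sum>i=0..<n. \<Sum>j=0..<n. \<Sum>l=0..<n. cmod (X$$(i,l)) * cmod (Y$$(l,j)))"
  proof (intro sum_mono)
    fix i j
    show "cmod (\<Sum>l=0..<n. X$$(i,l) * Y$$(l,j)) \<le> (\<Sum>l=0..<n. cmod (X$$(i,l)) * cmod (Y$$(l,j)))"
      using norm_sum[of "\<lambda>l. X$$(i,l) * Y$$(l,j)" "{0..<n}"] by (simp add: norm_mult)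
  qed
  also have "\<dots> = (\<Sum>i=0..<n. \<Sum>l=0..<n. cmod (X$$(i,l)) * (\<Sum>j=0..<n. cmod (Y$$(l,j))))"
  proof (rule sum.cong[OF refl])
    fix i
    show "(\<Sum>j=0..<n. \<Sum>l=0..<n. cmod (X$$(i,l)) * cmod (Y$$(l,j)))
        = (\<Sum>l=0..<n. cmod (X$$(i,l)) * (\<Sum>j=0..<n. cmod (Y$$(l,j))))"
      by (subst sum.swap) (simp add: sum_distrib_left)
  qed
  also have "\<dots> \<le> (\<Sum>i=0..<n. \<Sum>l=0..<n. cmod (X$$(i,l)) * Nm Y)"
    by (intro sum_mono mult_left_mono rowb) auto
  also have "\<dots> = Nm X * Nm Y" using X unfolding Nm_def by (simp add: sum_distrib_right)
  finally show ?thesis .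
qed

lemma Nm_one: "Nm (1\<^sub>m n) \<le> real n"
proof -
  have r: "(\<Sum>j=0..<n. cmod (if i = j then (1::complex) else 0)) = 1" if "i<n" for i
  proof -
    have "(\<Sum>j=0..<n. cmod (if i = j then (1::complex) else 0)) = (\<Sum>j=0..<n. if i = j then 1 else 0)"
      by (intro sum.cong refl) simp
    also have "\<dots> = 1" using that by simp
    finally show ?thesis .
  qed
  have "Nm (1\<^sub>m n) = (\<Sum>i=0..<n. 1)" unfolding Nm_def by (intro sum.cong refl) (auto simp: r)
  then show ?thesis by simp
qed

lemma Nm_zero: "Nm (0\<^sub>m n m) = 0"
  unfolding Nm_def by simp

fun Mseq :: "complex Matrix.mat \<Rightarrow> complex list \<Rightarrow> nat \<Rightarrow> complex Matrix.mat" where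
  "Mseq X es 0 = 1\<^sub>m (dim_row X)"
| "Mseq X es (Suc k) = Mseq X es k * (X - (es ! k) \<cdot>\<^sub>m 1\<^sub>m (dim_row X))"

lemma Mseq_carrier: "X \<in> carrier_mat n n \<Longrightarrow> Mseq X es k \<in> carrier_mat n n"
  by (induction k) auto

lemma tri_CH:
  assumes T: "T \<in> carrier_mat n n" and ut: "upper_triangular T"
  shows "k \<le> n \<Longrightarrow> i < n \<Longrightarrow> j < k \<Longrightarrow> Mseq T (diag_mat T) k $$ (i,j) = 0"
proof (induction k arbitrary: i j)
  case 0
  then show ?case by simp
next
  case (Suc k)
  have Mc: "Mseq T (diag_mat T) k \<in> carrier_mat n n" by (rule Mseq_carrier[OF T])
  have dk: "diag_mat T ! k = T $$ (k,k)" using Suc.prems T by (simp add: diag_mat_def)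
  have "Mseq T (diag_mat T) (Suc k) $$ (i,j)
      = (\<Sum>l=0..<n. Mseq T (diag_mat T) k $$ (i,l) * (T - T$$(k,k) \<cdot>\<^sub>m 1\<^sub>m n) $$ (l,j))"
    using Suc.prems T Mc dk by (auto simp: scalar_prod_def intro!: sum.cong)
  also have "\<dots> = 0"
  proof (rule sum.neutral, rule ballI)
    fix l assume l: "l \<in> {0..<n}"
    show "Mseq T (diag_mat T) k $$ (i,l) * (T - T$$(k,k) \<cdot>\<^sub>m 1\<^sub>m n) $$ (l,j) = 0"
    proof (cases "l < k")
      case True
      then show ?thesis using Suc.IH[of i l] Suc.prems by simp
    next
      case False
      have "(T - T$$(k,k) \<cdot>\<^sub>m 1\<^sub>m n) $$ (l,j) = T $$ (l,j) - T$$(k,k) * (if l = j then 1 else 0)"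
        using l Suc.prems T by auto
      also have "\<dots> = 0"
      proof (cases "j < l")
        case True
        then show ?thesis using ut T l unfolding upper_triangular_def by auto
      next
        case False
        then have "l = k" "j = k" using \<open>\<not> l < k\<close> Suc.prems by auto
        then show ?thesis by simp
      qed
      finally show ?thesis by simp
    qed
  qed
  finally show ?case .
qed

lemma assoc_cancel:
  fixes A B C D E F :: "complex Matrix.mat"
  assumes a: "A \<in> carrier_mat n n" and b: "B \<in> carrier_mat n n" and c: "C \<in> carrier_mat n n"
    and d: "D \<in> carrier_mat n n" and e: "E \<in> carrier_mat n n" and f: "F \<in> carrier_mat n n"
    and cd: "C * D = 1\<^sub>m n"
  shows "(A * B * C) * (D * E * F) = A * (B * E) * F"
proof -
  have DEF: "D*E*F = D*(E*F)" by (rule assoc_mult_mat[OF d e f])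
  have "C*(D*(E*F)) = C*D*(E*F)" by (rule assoc_mult_mat[OF c d mult_carrier_mat[OF e f], symmetric])
  moreover have "1\<^sub>m n * (E*F) = E*F" using e f by simp
  ultimately have CD: "C*(D*E*F) = E*F"
    using cd by (simp only: DEF)
  have "(A*B*C)*(D*E*F) = (A*B)*(C*(D*E*F))"
    by (rule assoc_mult_mat[OF mult_carrier_mat[OF a b] c mult_carrier_mat[OF mult_carrier_mat[OF d e] f]])
  also have "\<dots> = (A*B)*(E*F)" by (simp only: CD)
  also have "\<dots> = A*(B*(E*F))" by (rule assoc_mult_mat[OF a b mult_carrier_mat[OF e f]])
  also have "\<dots> = A*(B*E*F)" by (simp only: assoc_mult_mat[OF b e f])
  also have "\<dots> = A*(B*E)*F" by (rule assoc_mult_mat[OF a mult_carrier_mat[OF b e] f, symmetric])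
  finally show ?thesis .
qed

lemma CH_complex:
  assumes X: "X \<in> carrier_mat n n"
  shows "\<exists>es. length es = n \<and> (\<forall>e\<in>set es. eigenvalue X e) \<and> Mseq X es n = 0\<^sub>m n n"
proof -
  obtain es where cp: "char_poly X = (\<Prod>a\<leftarrow>es. [:- a, 1:])" and len: "length es = n"
    using char_poly_factorized[OF X] by auto
  obtain T P Q where sd: "schur_decomposition X es = (T,P,Q)" by (cases "schur_decomposition X es") auto
  from schur_decomposition[OF X cp sd]
  have sim: "similar_mat_wit X T P Q" and ut: "upper_triangular T" and dg: "diag_mat T = es" by auto
  from sim X have T: "T \<in> carrier_mat n n" and P: "P \<in> carrier_mat n n" and Q: "Q \<in> carrier_mat n n"
    and PQ: "P * Q = 1\<^sub>m n" and QP: "Q * P = 1\<^sub>m n" and XPTQ: "X = P * T * Q"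
    unfolding similar_mat_wit_def Let_def by auto
  have ev: "\<forall>e\<in>set es. eigenvalue X e"
    using eigenvalue_root_char_poly[OF X] cp linear_poly_root by auto
  have fac: "X - e \<cdot>\<^sub>m 1\<^sub>m n = P * (T - e \<cdot>\<^sub>m 1\<^sub>m n) * Q" for e
  proof -
    have "P * (T - e \<cdot>\<^sub>m 1\<^sub>m n) * Q = (P * T - e \<cdot>\<^sub>m P) * Q"
      proof -
        have "P * (e \<cdot>\<^sub>m 1\<^sub>m n) = e \<cdot>\<^sub>m P" using mult_smult_distrib[OF P one_carrier_mat, of e] right_mult_one_mat[OF P] by simp
        then show ?thesis using P T by (simp add: mult_minus_distrib_mat[of P n n])
      qed
    also have "\<dots> = P * T * Q - e \<cdot>\<^sub>m (P * Q)"
      using P T Q by (simp add: minus_mult_distrib_mat[of _ n n] mult_smult_assoc_mat[of P n n])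
    finally show ?thesis using XPTQ PQ by simp
  qed
  have rel: "Mseq X es k = P * Mseq T es k * Q" for k
  proof (induction k)
    case 0
    then show ?case using X T P Q PQ by simp
  next
    case (Suc k)
    have MT: "Mseq T es k \<in> carrier_mat n n" by (rule Mseq_carrier[OF T])
    have T': "T - (es!k) \<cdot>\<^sub>m 1\<^sub>m n \<in> carrier_mat n n" by (intro minus_carrier_mat smult_carrier_mat one_carrier_mat)
    have "Mseq X es (Suc k) = Mseq X es k * (X - (es!k) \<cdot>\<^sub>m 1\<^sub>m n)"
      using X by simp
    also have "\<dots> = (P * Mseq T es k * Q) * (P * (T - (es!k) \<cdot>\<^sub>m 1\<^sub>m n) * Q)"
      by (simp only: Suc.IH fac)
    also have "\<dots> = P * (Mseq T es k * (T - (es!k) \<cdot>\<^sub>m 1\<^sub>m n)) * Q"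
      by (rule assoc_cancel[OF P MT Q P T' Q QP])
    also have "Mseq T es k * (T - (es!k) \<cdot>\<^sub>m 1\<^sub>m n) = Mseq T es (Suc k)"
      using T by simp
    finally show ?case .
  qed
  have "Mseq T es n = 0\<^sub>m n n"
  proof (rule eq_matI)
    fix i j assume "i < dim_row (0\<^sub>m n n)" "j < dim_col (0\<^sub>m n n)"
    then show "Mseq T es n $$ (i,j) = 0\<^sub>m n n $$ (i,j)"
      using tri_CH[OF T ut, of n i j] dg by simp
  qed (use Mseq_carrier[OF T] in auto)
  then have "Mseq X es n = P * 0\<^sub>m n n * Q" by (simp only: rel)
  also have "\<dots> = 0\<^sub>m n n" using right_mult_zero_mat[OF P, of n] left_mult_zero_mat[OF Q, of n] by simp
  finally have "Mseq X es n = 0\<^sub>m n n" .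
  then show ?thesis using len ev by blast
qed



fun cc :: "real \<Rightarrow> real \<Rightarrow> real \<Rightarrow> nat \<Rightarrow> real" where
  "cc E r0 r1 0 = 0"
| "cc E r0 r1 (Suc i) = E + cc E r0 r1 i / (r1 - r0)"

lemma cc_ge0: "0 \<le> E \<Longrightarrow> r0 < r1 \<Longrightarrow> 0 \<le> cc E r0 r1 i"
  by (induction i) auto

lemma pow_Suc_left:
  fixes X :: "complex Matrix.mat"
  assumes X: "X \<in> carrier_mat n n" shows "X ^\<^sub>m Suc m = X * X ^\<^sub>m m"
proof (induction m)
  case 0 then show ?case using X by simp
next
  case (Suc m)
  have "X ^\<^sub>m Suc (Suc m) = X ^\<^sub>m Suc m * X" by simp
  also have "\<dots> = X * X ^\<^sub>m m * X" using Suc by simp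
  also have "\<dots> = X * (X ^\<^sub>m m * X)" by (rule assoc_mult_mat[OF X pow_carrier_mat[OF X] X])
  also have "\<dots> = X * X ^\<^sub>m Suc m" by simp
  finally show ?case .
qed

lemma minus_plus_cancel_mat:
  fixes Z Y :: "complex Matrix.mat"
  shows "Z \<in> carrier_mat n m \<Longrightarrow> Y \<in> carrier_mat n m \<Longrightarrow> Z - Y + Y = Z"
  by (rule eq_matI) auto

lemma Mseq_step:
  assumes X: "X \<in> carrier_mat n n"
  shows "Mseq X es k * X ^\<^sub>m Suc m = Mseq X es (Suc k) * X ^\<^sub>m m + (es!k) \<cdot>\<^sub>m (Mseq X es k * X ^\<^sub>m m)"
proof -
  define M where "M = Mseq X es k"
  define W where "W = X ^\<^sub>m m"
  define e where "e = es ! k"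
  have M: "M \<in> carrier_mat n n" unfolding M_def by (rule Mseq_carrier[OF X])
  have W: "W \<in> carrier_mat n n" unfolding W_def using X by simp
  have "Mseq X es k * X ^\<^sub>m Suc m = M * (X * W)" unfolding M_def W_def pow_Suc_left[OF X] ..
  also have "\<dots> = M * X * W" by (rule assoc_mult_mat[OF M X W, symmetric])
  finally have L: "Mseq X es k * X ^\<^sub>m Suc m = M * X * W" .
  have S: "Mseq X es (Suc k) = M * X - e \<cdot>\<^sub>m M"
  proof -
    have "Mseq X es (Suc k) = M * (X - e \<cdot>\<^sub>m 1\<^sub>m n)" unfolding M_def e_def using X by simp
    also have "\<dots> = M * X - M * (e \<cdot>\<^sub>m 1\<^sub>m n)"
      by (rule mult_minus_distrib_mat[OF M X]) simp
    also have "M * (e \<cdot>\<^sub>m 1\<^sub>m n) = e \<cdot>\<^sub>m M"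
      using mult_smult_distrib[OF M one_carrier_mat, of e] right_mult_one_mat[OF M] by simp
    finally show ?thesis .
  qed
  have "Mseq X es (Suc k) * W + e \<cdot>\<^sub>m (M * W) = (M * X * W - e \<cdot>\<^sub>m (M * W)) + e \<cdot>\<^sub>m (M * W)"
  proof -
    have "(M * X - e \<cdot>\<^sub>m M) * W = M * X * W - (e \<cdot>\<^sub>m M) * W"
      by (rule minus_mult_distrib_mat[OF mult_carrier_mat[OF M X] _ W]) (use M in simp)
    also have "(e \<cdot>\<^sub>m M) * W = e \<cdot>\<^sub>m (M * W)" by (rule mult_smult_assoc_mat[OF M W])
    finally show ?thesis unfolding S by simp
  qed
  also have "\<dots> = M * X * W"
    by (rule minus_plus_cancel_mat[of _ n n]) (use M X W in auto)
  finally show ?thesis unfolding L M_def W_def e_def by simp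
qed

lemma Nm_minus: assumes "X \<in> carrier_mat n m" "Y \<in> carrier_mat n m"
  shows "Nm (X - Y) \<le> Nm X + Nm Y"
proof -
  have "Nm (X - Y) = (\<Sum>i=0..<n. \<Sum>j=0..<m. cmod (X $$ (i,j) - Y $$ (i,j)))"
    using assms unfolding Nm_def by (auto intro!: sum.cong)
  also have "\<dots> \<le> (\<Sum>i=0..<n. \<Sum>j=0..<m. cmod (X $$ (i,j)) + cmod (Y $$ (i,j)))"
    by (intro sum_mono norm_triangle_ineq4)
  also have "\<dots> = Nm X + Nm Y" using assms unfolding Nm_def by (simp add: sum.distrib)
  finally show ?thesis .
qed

lemma Mseq_Nm:
  assumes X: "X \<in> carrier_mat n n" and ev: "\<forall>e\<in>set es. cmod e \<le> r0" and r0: "0 \<le> r0"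
  shows "k \<le> length es \<Longrightarrow> Nm (Mseq X es k) \<le> real n * (Nm X + real n * r0)^k"
proof (induction k)
  case 0
  then show ?case using X Nm_one[of n] by simp
next
  case (Suc k)
  have M: "Mseq X es k \<in> carrier_mat n n" by (rule Mseq_carrier[OF X])
  have e: "cmod (es ! k) \<le> r0" using ev Suc.prems by simp
  have "Nm (X - (es!k) \<cdot>\<^sub>m 1\<^sub>m n) \<le> Nm X + Nm ((es!k) \<cdot>\<^sub>m 1\<^sub>m n)"
    by (rule Nm_minus[OF X]) simp
  also have "Nm ((es!k) \<cdot>\<^sub>m 1\<^sub>m n) \<le> r0 * real n"
    unfolding Nm_smult by (rule mult_mono[OF e Nm_one r0 Nm_ge0])
  finally have F: "Nm (X - (es!k) \<cdot>\<^sub>m 1\<^sub>m n) \<le> Nm X + real n * r0" by (simp add: mult.commute)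
  have "Nm (Mseq X es (Suc k)) = Nm (Mseq X es k * (X - (es!k) \<cdot>\<^sub>m 1\<^sub>m n))" using X by simp
  also have "\<dots> \<le> Nm (Mseq X es k) * Nm (X - (es!k) \<cdot>\<^sub>m 1\<^sub>m n)"
    by (rule Nm_mult[OF M]) (intro minus_carrier_mat smult_carrier_mat one_carrier_mat)
  also have "\<dots> \<le> (real n * (Nm X + real n * r0)^k) * (Nm X + real n * r0)"
    using Suc F r0 Nm_ge0[of X] by (intro mult_mono Nm_ge0) auto
  finally show ?case by (simp add: mult_ac)
qed

lemma J1:
  assumes X: "X \<in> carrier_mat n n" and M0: "Mseq X es n = 0\<^sub>m n n"
    and ev: "\<forall>e\<in>set es. cmod e \<le> r0" and len: "length es = n" and r0: "0 \<le> r0" and r01: "r0 < r1"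
    and E: "\<forall>k\<le>n. Nm (Mseq X es k) \<le> E"
  shows "i + k = n \<Longrightarrow> Nm (Mseq X es k * X ^\<^sub>m m) \<le> cc E r0 r1 i * r1^m"
proof (induction i arbitrary: k m)
  case 0
  then have "k = n" by simp
  then have "Mseq X es k * X ^\<^sub>m m = 0\<^sub>m n n" using M0 X by simp
  then show ?case by (simp add: Nm_zero)
next
  case (Suc i)
  have kn: "k < n" using Suc.prems by simp
  have IH: "Nm (Mseq X es (Suc k) * X ^\<^sub>m m') \<le> cc E r0 r1 i * r1^m'" for m'
    using Suc.IH[of "Suc k" m'] Suc.prems by simp
  have E0: "0 \<le> E" using E[rule_format, of 0] Nm_ge0[of "Mseq X es 0"] by simp
  have ci: "0 \<le> cc E r0 r1 i" using cc_ge0[OF E0 r01] .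
  define K where "K = cc E r0 r1 (Suc i)"
  have KE: "E \<le> K" unfolding K_def using ci r01 by simp
  have Kc: "cc E r0 r1 i + r0 * K \<le> r1 * K"
  proof -
    have "cc E r0 r1 i = (r1 - r0) * (cc E r0 r1 i / (r1 - r0))" using r01 by simp
    also have "\<dots> \<le> (r1 - r0) * K" unfolding K_def using r01 E0 by (intro mult_left_mono) auto
    finally show ?thesis by (simp add: algebra_simps)
  qed
  have e: "cmod (es ! k) \<le> r0" using ev kn len by simp
  have r1p: "0 \<le> r1^m'" for m' using r0 r01 by simp
  show ?case unfolding K_def[symmetric]
  proof (induction m)
    case 0
    have "Nm (Mseq X es k * X ^\<^sub>m 0) = Nm (Mseq X es k)" using X right_mult_one_mat[OF Mseq_carrier[OF X, of es k]] by simp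
    also have "\<dots> \<le> E" using E kn by simp
    finally show ?case using KE by simp
  next
    case (Suc m)
    have "Nm (Mseq X es k * X ^\<^sub>m Suc m)
        \<le> Nm (Mseq X es (Suc k) * X ^\<^sub>m m) + Nm ((es!k) \<cdot>\<^sub>m (Mseq X es k * X ^\<^sub>m m))"
      unfolding Mseq_step[OF X]
      by (rule Nm_add[OF mult_carrier_mat[OF Mseq_carrier[OF X] pow_carrier_mat[OF X]]
            smult_carrier_mat[OF mult_carrier_mat[OF Mseq_carrier[OF X] pow_carrier_mat[OF X]]]])
    also have "\<dots> \<le> cc E r0 r1 i * r1^m + r0 * (K * r1^m)"
      unfolding Nm_smult by (intro add_mono IH mult_mono[OF e Suc.IH r0 Nm_ge0])
    also have "\<dots> \<le> K * r1^Suc m"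
      using mult_right_mono[OF Kc r1p[of m]] by (simp add: algebra_simps)
    finally show ?case .
  qed
qed

lemma Jfinal:
  assumes X: "X \<in> carrier_mat n n" and ev: "\<forall>e. eigenvalue X e \<longrightarrow> cmod e \<le> r0"
    and r0: "0 \<le> r0" and r01: "r0 < r1" and a: "Nm X \<le> a"
  shows "Nm (X ^\<^sub>m m) \<le> cc (real n * (1 + a + real n * r0)^n) r0 r1 n * r1^m"
proof -
  obtain es where len: "length es = n" and eve: "\<forall>e\<in>set es. eigenvalue X e"
    and M0: "Mseq X es n = 0\<^sub>m n n" using CH_complex[OF X] by blast
  have ev': "\<forall>e\<in>set es. cmod e \<le> r0" using ev eve by blast
  have a0: "0 \<le> a" using a Nm_ge0[of X] by simp
  have E: "\<forall>k\<le>n. Nm (Mseq X es k) \<le> real n * (1 + a + real n * r0)^n"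
  proof (intro allI impI)
    fix k assume k: "k \<le> n"
    have "Nm (Mseq X es k) \<le> real n * (Nm X + real n * r0)^k" using Mseq_Nm[OF X ev' r0] k len by simp
    also have "\<dots> \<le> real n * (1 + a + real n * r0)^k"
      by (intro mult_left_mono power_mono) (use a r0 Nm_ge0[of X] in auto)
    also have "\<dots> \<le> real n * (1 + a + real n * r0)^n"
      by (intro mult_left_mono power_increasing k) (use a0 r0 in auto)
    finally show "Nm (Mseq X es k) \<le> real n * (1 + a + real n * r0)^n" .
  qed
  have "Nm (Mseq X es 0 * X ^\<^sub>m m) \<le> cc (real n * (1 + a + real n * r0)^n) r0 r1 n * r1^m"
    by (rule J1[OF X M0 ev' len r0 r01 E]) simp
  then show ?thesis using X by simp
qed



definition idx :: "nat \<Rightarrow> 'n::finite" where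
  "idx = (SOME h. bij_betw h {0..<CARD('n)} (UNIV::'n set))"

lemma idx_bij: "bij_betw (idx :: nat \<Rightarrow> 'n::finite) {0..<CARD('n)} UNIV"
proof -
  obtain h where "bij_betw h {0..<CARD('n)} (UNIV::'n set)"
    using ex_bij_betw_nat_finite[of "UNIV::'n set"] by auto
  then show ?thesis unfolding idx_def
    using someI_ex[of "\<lambda>h. bij_betw h {0..<CARD('n)} (UNIV::'n set)"] by blast
qed

lemma sum_idx: "(\<Sum>k=0..<CARD('n). f (idx k :: 'n::finite)) = (\<Sum>x\<in>UNIV. f x)"
  by (rule sum.reindex_bij_betw[OF idx_bij])

lemma idx_inv:
  fixes x :: "'n::finite"
  shows "inv_into {0..<CARD('n)} idx x < CARD('n)" "idx (inv_into {0..<CARD('n)} idx x) = x"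
proof -
  have b: "bij_betw (idx :: nat \<Rightarrow> 'n) {0..<CARD('n)} UNIV" by (rule idx_bij)
  show "idx (inv_into {0..<CARD('n)} idx x) = x"
    using b by (simp add: bij_betw_def f_inv_into_f)
  show "inv_into {0..<CARD('n)} idx x < CARD('n)"
    using b by (metis UNIV_I atLeastLessThan_iff bij_betw_def inv_into_into)
qed

lemma idx_inv2: "k < CARD('n) \<Longrightarrow> inv_into {0..<CARD('n)} idx (idx k :: 'n::finite) = k"
  using idx_bij[where 'n='n] by (simp add: bij_betw_def inv_into_f_f)

lemma idx_inj: "i < CARD('n) \<Longrightarrow> j < CARD('n) \<Longrightarrow> (idx i :: 'n::finite) = idx j \<longleftrightarrow> i = j"
  using idx_bij[where 'n='n] unfolding bij_betw_def inj_on_def by auto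

definition toM :: "real^'n^'n \<Rightarrow> complex Matrix.mat" where
  "toM B = Matrix.mat CARD('n) CARD('n) (\<lambda>(i,j). complex_of_real ((B $ idx i) $ idx j))"

lemma toM_carrier: "toM (B::real^'n^'n) \<in> carrier_mat CARD('n) CARD('n)"
  unfolding toM_def by simp

lemma toM_index: "i < CARD('n) \<Longrightarrow> j < CARD('n) \<Longrightarrow> toM (B::real^'n^'n) $$ (i,j) = of_real ((B $ idx i) $ idx j)"
  unfolding toM_def by simp

lemma toM_mult: "toM ((A::real^'n^'n) ** B) = toM A * toM B"
proof (rule eq_matI)
  fix i j assume i: "i < dim_row (toM A * toM B)" and j: "j < dim_col (toM A * toM B)"
  then have i': "i < CARD('n)" and j': "j < CARD('n)" using toM_carrier[of A] toM_carrier[of B] by auto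
  have "(toM A * toM B) $$ (i,j) = (\<Sum>k=0..<CARD('n). toM A $$ (i,k) * toM B $$ (k,j))"
    using i' j' toM_carrier[of A] toM_carrier[of B] by (auto simp: scalar_prod_def intro!: sum.cong)
  also have "\<dots> = (\<Sum>k=0..<CARD('n). of_real ((A $ idx i) $ idx k * (B $ idx k) $ idx j))"
    using i' j' by (intro sum.cong refl) (simp add: toM_index)
  also have "\<dots> = (\<Sum>x\<in>UNIV. of_real ((A $ idx i) $ x * (B $ x) $ idx j))"
    by (rule sum_idx)
  also have "\<dots> = toM (A ** B) $$ (i,j)"
    using i' j' by (simp add: toM_index matrix_matrix_mult_def)
  finally show "toM (A ** B) $$ (i,j) = (toM A * toM B) $$ (i,j)" by simp
qed (auto simp: toM_def)

lemma toM_one: "toM (mat 1 :: real^'n^'n) = 1\<^sub>m CARD('n)"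
proof (rule eq_matI)
  fix i j assume "i < dim_row (1\<^sub>m CARD('n))" "j < dim_col (1\<^sub>m CARD('n))"
  then have i: "i < CARD('n)" and j: "j < CARD('n)" by auto
  show "toM (mat 1 :: real^'n^'n) $$ (i,j) = 1\<^sub>m CARD('n) $$ (i,j)"
    using i j idx_inj[where 'n='n, OF i j] by (simp add: toM_index Finite_Cartesian_Product.mat_def)
qed (auto simp: toM_def)

lemma toM_mpow: "toM (mpow (B::real^'n^'n) m) = toM B ^\<^sub>m m"
proof (induction m)
  case 0
  then show ?case using toM_carrier[of B] by (simp add: toM_one)
next
  case (Suc m)
  then show ?case by (simp only: mpow_Suc' toM_mult pow_mat.simps)
qed

lemma Nm_toM: "Nm (toM (B::real^'n^'n)) = (\<Sum>i\<in>UNIV. \<Sum>j\<in>UNIV. \<bar>(B $ i) $ j\<bar>)"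
proof -
  have "Nm (toM B) = (\<Sum>i=0..<CARD('n). \<Sum>j=0..<CARD('n). \<bar>(B $ idx i) $ idx j\<bar>)"
    unfolding Nm_def using toM_carrier[of B] by (auto simp: toM_index intro!: sum.cong)
  also have "\<dots> = (\<Sum>i\<in>UNIV. \<Sum>j=0..<CARD('n). \<bar>(B $ i) $ idx j\<bar>)"
    by (rule sum_idx)
  also have "\<dots> = (\<Sum>i\<in>UNIV. \<Sum>j\<in>UNIV. \<bar>(B $ i) $ j\<bar>)"
    by (intro sum.cong refl sum_idx)
  finally show ?thesis .
qed

lemma mnorm_mpow_Nm: "mnorm (mpow (B::real^'n^'n) m) \<le> Nm (toM B ^\<^sub>m m)"
  using mnorm_le_sum[of "mpow B m"] Nm_toM[of "mpow B m"] toM_mpow[of B m] by simp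

lemma Nm_toM_le: "Nm (toM (B::real^'n^'n)) \<le> real CARD('n) * real CARD('n) * mnorm B"
proof -
  have "Nm (toM B) \<le> (\<Sum>i\<in>(UNIV::'n set). \<Sum>j\<in>(UNIV::'n set). mnorm B)"
    unfolding Nm_toM by (intro sum_mono mnorm_entry)
  then show ?thesis by simp
qed

lemma cmat_index: "(cmat B $ i) $ j = complex_of_real ((B $ i) $ j)"
  unfolding cmat_def by simp

lemma eig_to_c:
  fixes B :: "real^'n^'n"
  assumes "eigenvalue (toM B) e" shows "e \<in> ceigenvalues B"
proof -
  let ?n = "CARD('n)"
  let ?inv = "inv_into {0..<?n} (idx :: nat \<Rightarrow> 'n)"
  obtain v where v: "v \<in> carrier_vec ?n" and v0: "v \<noteq> 0\<^sub>v ?n" and ev: "toM B *\<^sub>v v = e \<cdot>\<^sub>v v"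
    using assms toM_carrier[of B] unfolding eigenvalue_def eigenvector_def by auto
  define w :: "complex^'n" where "w = (\<chi> x. vec_index v (?inv x))"
  have w_idx: "w $ idx k = vec_index v k" if "k < ?n" for k
    unfolding w_def using idx_inv2[where 'n='n, OF that] by simp
  obtain k where k: "k < ?n" and vk: "vec_index v k \<noteq> 0"
  proof -
    have "\<not> (\<forall>k<?n. vec_index v k = 0)"
    proof
      assume "\<forall>k<?n. vec_index v k = 0"
      then have "v = 0\<^sub>v ?n" using v by (intro eq_vecI) auto
      then show False using v0 by simp
    qed
    then show ?thesis using that by blast
  qed
  have w0: "w \<noteq> 0"
  proof
    assume "w = 0"
    then have "w $ idx k = 0" by simp
    then show False using w_idx[OF k] vk by simp
  qed
  have "cmat B *v w = e *s w"
  proof (rule Finite_Cartesian_Product.vec_eq_iff[THEN iffD2], rule allI)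
    fix x :: 'n
    define i where "i = ?inv x"
    have i: "i < ?n" and xi: "idx i = x" unfolding i_def by (rule idx_inv)+
    have "(cmat B *v w) $ x = (\<Sum>y\<in>UNIV. complex_of_real ((B $ x) $ y) * w $ y)"
      by (simp add: matrix_vector_mult_def cmat_index)
    also have "\<dots> = (\<Sum>k=0..<?n. complex_of_real ((B $ x) $ idx k) * w $ idx k)"
      by (rule sum_idx[symmetric])
    also have "\<dots> = (\<Sum>k=0..<?n. toM B $$ (i,k) * vec_index v k)"
      using i xi by (intro sum.cong refl) (simp add: w_idx toM_index)
    also have "\<dots> = vec_index (toM B *\<^sub>v v) i"
      using i v toM_carrier[of B] by (simp add: scalar_prod_def)
    also have "\<dots> = e * vec_index v i" using ev i v by simp
    also have "\<dots> = (e *s w) $ x" using w_idx[OF i] xi by simp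
    finally show "(cmat B *v w) $ x = (e *s w) $ x" .
  qed
  then show ?thesis unfolding ceigenvalues_def using w0 by blast
qed

lemma c_to_eig:
  fixes B :: "real^'n^'n"
  assumes "e \<in> ceigenvalues B" shows "eigenvalue (toM B) e"
proof -
  let ?n = "CARD('n)"
  obtain w where w0: "w \<noteq> 0" and ev: "cmat B *v w = e *s w"
    using assms unfolding ceigenvalues_def by auto
  define v where "v = Matrix.vec ?n (\<lambda>k. w $ idx k)"
  have v: "v \<in> carrier_vec ?n" unfolding v_def by simp
  obtain x where x: "w $ x \<noteq> 0" using w0 by (auto simp: Finite_Cartesian_Product.vec_eq_iff)
  have v0: "v \<noteq> 0\<^sub>v ?n"
  proof
    assume "v = 0\<^sub>v ?n"
    then have "vec_index v (inv_into {0..<?n} idx x) = 0" using idx_inv(1)[of x] by simp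
    then show False using x idx_inv[of x] unfolding v_def by simp
  qed
  have "toM B *\<^sub>v v = e \<cdot>\<^sub>v v"
  proof (rule eq_vecI)
    fix i assume "i < dim_vec (e \<cdot>\<^sub>v v)"
    then have i: "i < ?n" using v by simp
    have "vec_index (toM B *\<^sub>v v) i = (\<Sum>k=0..<?n. toM B $$ (i,k) * vec_index v k)"
      using i v toM_carrier[of B] by (simp add: scalar_prod_def)
    also have "\<dots> = (\<Sum>k=0..<?n. complex_of_real ((B $ idx i) $ idx k) * w $ idx k)"
      using i by (intro sum.cong refl) (simp add: v_def toM_index)
    also have "\<dots> = (\<Sum>y\<in>UNIV. complex_of_real ((B $ idx i) $ y) * w $ y)"
      by (rule sum_idx)
    also have "\<dots> = (cmat B *v w) $ idx i"
      by (simp add: matrix_vector_mult_def cmat_index)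
    also have "\<dots> = e * w $ idx i" using ev by simp
    also have "\<dots> = vec_index (e \<cdot>\<^sub>v v) i" using i v unfolding v_def by simp
    finally show "vec_index (toM B *\<^sub>v v) i = vec_index (e \<cdot>\<^sub>v v) i" .
  qed (use v toM_carrier[of B] in simp)
  moreover have "dim_row (toM B) = CARD('n)" using toM_carrier[of B] by simp
  ultimately show ?thesis unfolding eigenvalue_def eigenvector_def using v v0 by auto
qed

lemma ceig_finite: "finite (ceigenvalues (B::real^'n^'n))"
proof -
  have "ceigenvalues B \<subseteq> spectrum (toM B)"
    unfolding spectrum_def using c_to_eig by auto
  then show ?thesis using card_finite_spectrum(1)[OF toM_carrier[of B]] finite_subset by blast
qed

lemma ceig_nonempty: "ceigenvalues (B::real^'n^'n) \<noteq> {}"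
proof -
  have "spectrum (toM B) \<noteq> {}" by (rule spectrum_non_empty[OF toM_carrier]) simp
  then obtain e where "eigenvalue (toM B) e" unfolding spectrum_def by auto
  then show ?thesis using eig_to_c by blast
qed

lemma spec_rad_ge: "e \<in> ceigenvalues (B::real^'n^'n) \<Longrightarrow> cmod e \<le> spec_rad B"
  unfolding spec_rad_def by (rule Max_ge) (auto simp: ceig_finite)

lemma spec_rad_nonneg: "0 \<le> spec_rad (B::real^'n^'n)"
proof -
  obtain e where "e \<in> ceigenvalues B" using ceig_nonempty by blast
  then show ?thesis using spec_rad_ge[of e B] norm_ge_zero[of e] by linarith
qed

lemma eig_bound:
  fixes B :: "real^'n^'n"
  assumes "e \<in> ceigenvalues B" shows "cmod e \<le> (\<Sum>i\<in>UNIV. \<Sum>j\<in>UNIV. \<bar>(B $ i) $ j\<bar>)"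
proof -
  obtain w where w0: "w \<noteq> 0" and ev: "cmat B *v w = e *s w"
    using assms unfolding ceigenvalues_def by auto
  define mx where "mx = Max (range (\<lambda>x. cmod (w $ x)))"
  have "mx \<in> range (\<lambda>x. cmod (w $ x))" unfolding mx_def by (rule Max_in) auto
  then obtain l where l: "mx = cmod (w $ l)" by auto
  have mxge: "cmod (w $ x) \<le> cmod (w $ l)" for x unfolding l[symmetric] mx_def by (rule Max_ge) auto
  obtain x where x: "w $ x \<noteq> 0" using w0 by (auto simp: Finite_Cartesian_Product.vec_eq_iff)
  have wl: "0 < cmod (w $ l)" using mxge[of x] x by (metis zero_less_norm_iff order_less_le_trans)
  have "cmod e * cmod (w $ l) = cmod ((cmat B *v w) $ l)" using ev by (simp add: norm_mult)
  also have "\<dots> = cmod (\<Sum>j\<in>UNIV. complex_of_real ((B $ l) $ j) * w $ j)"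
    by (simp add: matrix_vector_mult_def cmat_index)
  also have "\<dots> \<le> (\<Sum>j\<in>UNIV. cmod (complex_of_real ((B $ l) $ j) * w $ j))" by (rule norm_sum)
  also have "\<dots> \<le> (\<Sum>j\<in>UNIV. \<bar>(B $ l) $ j\<bar> * cmod (w $ l))"
    by (intro sum_mono) (simp add: norm_mult mult_left_mono mxge)
  also have "\<dots> = (\<Sum>j\<in>UNIV. \<bar>(B $ l) $ j\<bar>) * cmod (w $ l)" by (simp add: sum_distrib_right)
  finally have "cmod e \<le> (\<Sum>j\<in>UNIV. \<bar>(B $ l) $ j\<bar>)" using wl by simp
  also have "\<dots> \<le> (\<Sum>i\<in>UNIV. \<Sum>j\<in>UNIV. \<bar>(B $ i) $ j\<bar>)"
    by (rule member_le_sum[where f="\<lambda>i. \<Sum>j\<in>UNIV. \<bar>(B $ i) $ j\<bar>"]) (auto intro: sum_nonneg)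
  finally show ?thesis .
qed

lemma spec_rad_le: "spec_rad (B::real^'n^'n) \<le> (\<Sum>i\<in>UNIV. \<Sum>j\<in>UNIV. \<bar>(B $ i) $ j\<bar>)"
  unfolding spec_rad_def using ceig_finite ceig_nonempty eig_bound by (subst Max_le_iff) auto

lemma unif:
  assumes r0: "0 \<le> r0" and r01: "r0 < r1"
  shows "\<exists>C\<ge>1. \<forall>B::real^'n^'n. mnorm B \<le> a \<and> spec_rad B \<le> r0 \<longrightarrow> (\<forall>m. mnorm (mpow B m) \<le> C * r1^m)"
proof -
  let ?n = "CARD('n)"
  define a' where "a' = real ?n * real ?n * a"
  define C where "C = max 1 (cc (real ?n * (1 + a' + real ?n * r0)^?n) r0 r1 ?n)"
  have "\<forall>B::real^'n^'n. mnorm B \<le> a \<and> spec_rad B \<le> r0 \<longrightarrow> (\<forall>m. mnorm (mpow B m) \<le> C * r1^m)"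
  proof (intro allI impI)
    fix B :: "real^'n^'n" and m
    assume B: "mnorm B \<le> a \<and> spec_rad B \<le> r0"
    have Na: "Nm (toM B) \<le> a'"
      unfolding a'_def using Nm_toM_le[of B] B by (meson mult_left_mono of_nat_0_le_iff mult_nonneg_nonneg order_trans)
    have ev: "\<forall>e. eigenvalue (toM B) e \<longrightarrow> cmod e \<le> r0"
      using B eig_to_c spec_rad_ge by (meson order_trans)
    have "mnorm (mpow B m) \<le> Nm (toM B ^\<^sub>m m)" by (rule mnorm_mpow_Nm)
    also have "\<dots> \<le> cc (real ?n * (1 + a' + real ?n * r0)^?n) r0 r1 ?n * r1^m"
      by (rule Jfinal[OF toM_carrier ev r0 r01 Na])
    also have "\<dots> \<le> C * r1^m" unfolding C_def using r0 r01 by (intro mult_right_mono) auto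
    finally show "mnorm (mpow B m) \<le> C * r1^m" .
  qed
  then show ?thesis unfolding C_def by (intro exI[of _ C]) (auto simp: C_def)
qed



definition jchain :: "(nat \<Rightarrow> real^'n^'n) \<Rightarrow> real \<Rightarrow> nat \<Rightarrow> nat \<Rightarrow> nat \<Rightarrow> bool" where
  "jchain A eps i t m \<longleftrightarrow> (\<exists>c. c 0 = i \<and> c m \<le> t \<and>
      (\<forall>l<m. c l < c (Suc l) \<and> eps \<le> mnorm (A (c (Suc l)) - A (c l))))"

lemma chain_bound:
  fixes A :: "nat \<Rightarrow> real^'n^'n"
  assumes p: "p \<ge> 1" and pv: "pvar p A \<le> ereal Astar" and eps: "0 < eps"
    and ch: "jchain A eps i t m" and i: "1 \<le> i"
  shows "real m * eps powr p \<le> Astar powr p"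
proof -
  define S where "S = (SUP \<iota>\<in>{\<iota>. strict_mono \<iota> \<and> \<iota> 0 \<ge> 1}.
       (\<Sum>k. ennreal (mnorm (A (\<iota> (Suc k)) - A (\<iota> k)) powr p)))"
  have pv': "(if S = \<infinity> then \<infinity> else ereal (enn2real S powr (1/p))) \<le> ereal Astar"
    using pv unfolding pvar_def S_def Let_def by simp
  then have Sfin: "S \<noteq> \<infinity>" by (cases "S = \<infinity>") auto
  with pv' have SA: "enn2real S powr (1/p) \<le> Astar" by simp
  obtain c where c0: "c 0 = i" and cm: "c m \<le> t"
    and cl: "\<forall>l<m. c l < c (Suc l) \<and> eps \<le> mnorm (A (c (Suc l)) - A (c l))"
    using ch unfolding jchain_def by blast
  define \<iota> where "\<iota> l = (if l \<le> m then c l else c m + (l - m))" for l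
  have sm: "strict_mono \<iota>"
  proof (rule strict_mono_Suc_iff[THEN iffD2], intro allI)
    fix l show "\<iota> l < \<iota> (Suc l)"
    proof (cases "l < m")
      case True
      then show ?thesis using cl unfolding \<iota>_def by auto
    next
      case False
      then show ?thesis unfolding \<iota>_def by auto
    qed
  qed
  have i0: "\<iota> 0 \<ge> 1" using c0 i unfolding \<iota>_def by simp
  have "ennreal (real m * eps powr p) = (\<Sum>l<m. ennreal (eps powr p))"
    by (subst sum_ennreal) auto
  also have "\<dots> \<le> (\<Sum>l<m. ennreal (mnorm (A (\<iota> (Suc l)) - A (\<iota> l)) powr p))"
  proof (intro sum_mono ennreal_leI powr_mono2)
    fix l assume "l \<in> {..<m}"
    then have "l < m" by simp
    then show "eps \<le> mnorm (A (\<iota> (Suc l)) - A (\<iota> l))" using cl unfolding \<iota>_def by auto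
  qed (use p eps in auto)
  also have "\<dots> \<le> (\<Sum>l. ennreal (mnorm (A (\<iota> (Suc l)) - A (\<iota> l)) powr p))"
    by (rule sum_le_suminf) auto
  also have "\<dots> \<le> S" unfolding S_def by (rule SUP_upper) (use sm i0 in auto)
  finally have le: "ennreal (real m * eps powr p) \<le> S" .
  have "real m * eps powr p = enn2real (ennreal (real m * eps powr p))" by simp
  also have "\<dots> \<le> enn2real S" using le Sfin by (intro enn2real_mono) (auto simp: top_unique less_top)
  also have "\<dots> = (enn2real S powr (1/p)) powr p" using p by (simp add: powr_powr)
  also have "\<dots> \<le> Astar powr p" by (rule powr_mono2) (use p SA in auto)
  finally show ?thesis .
qed

lemma mnorm_zero: "mnorm (0::real^'n^'n) = 0"
proof -
  have "((*v) (0::real^'n^'n)) = (\<lambda>x. 0)" by (rule ext) (simp add: matrix_vector_mult_def Finite_Cartesian_Product.vec_eq_iff)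
  then show ?thesis unfolding mnorm_def using onorm_zero by simp
qed

lemma block:
  fixes A :: "nat \<Rightarrow> real^'n^'n"
  assumes H: "\<forall>i\<ge>1. \<forall>m. mnorm (mpow (A i) m) \<le> C * r1^m" and C1: "1 \<le> C"
    and r1: "0 \<le> r1" and eps: "0 < eps" and rho: "r1 + C * eps \<le> rho"
  shows "s < t \<Longrightarrow> \<not> jchain A eps (Suc s) t (Suc k) \<Longrightarrow> mnorm (mprod A s (t - s)) \<le> C^(Suc k) * rho^(t-s)"
proof (induction k arbitrary: s rule: less_induct)
  case (less k)
  have rho0: "0 \<le> rho" using rho r1 C1 eps by (smt (verit) mult_nonneg_nonneg)
  have blk: "mnorm (mprod A s' (u - s')) \<le> C * rho^(u-s')"
    if su: "s' < u" and cl: "\<forall>j. Suc s' \<le> j \<and> j \<le> u \<longrightarrow> mnorm (A j - A (Suc s')) < eps" for s' u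
  proof -
    have "mnorm (mprod A s' (u - s')) \<le> C * (r1 + C*eps)^(u - s')"
    proof (rule perturb[where B="A (Suc s')"])
      show "\<forall>m. mnorm (mpow (A (Suc s')) m) \<le> C * r1^m" using H by simp
      show "\<forall>j. 1 \<le> j \<and> j \<le> u - s' \<longrightarrow> mnorm (A (s' + j) - A (Suc s')) \<le> eps"
        using cl by (auto intro: less_imp_le)
    qed (use r1 eps in auto)
    also have "\<dots> \<le> C * rho^(u-s')"
      using rho r1 C1 eps by (intro mult_left_mono power_mono) auto
    finally show ?thesis .
  qed
  show ?case
  proof (cases "\<forall>j. Suc s \<le> j \<and> j \<le> t \<longrightarrow> mnorm (A j - A (Suc s)) < eps")
    case True
    have "mnorm (mprod A s (t - s)) \<le> C * rho^(t-s)" by (rule blk[OF less.prems(1) True])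
    also have "\<dots> \<le> C^(Suc k) * rho^(t-s)"
      using C1 rho0 by (intro mult_right_mono) (auto simp: power_increasing[of 1 "Suc k" C, simplified])
    finally show ?thesis .
  next
    case False
    define P where "P j \<longleftrightarrow> Suc s \<le> j \<and> j \<le> t \<and> eps \<le> mnorm (A j - A (Suc s))" for j
    have exP: "\<exists>j. P j" using False unfolding P_def by (auto simp: not_less)
    define j0 where "j0 = (LEAST j. P j)"
    have Pj0: "P j0" unfolding j0_def by (rule LeastI_ex[OF exP])
    have min: "\<not> P j" if "j < j0" for j using not_less_Least[OF that[unfolded j0_def]] unfolding j0_def .
    have j0s: "j0 \<noteq> Suc s" using Pj0 eps unfolding P_def by (auto simp: mnorm_zero)
    define u where "u = j0 - 1"
    have su: "s < u" and ut: "u < t" and j0u: "j0 = Suc u" using Pj0 j0s unfolding P_def u_def by auto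
    have cl: "\<forall>j. Suc s \<le> j \<and> j \<le> u \<longrightarrow> mnorm (A j - A (Suc s)) < eps"
    proof (intro allI impI)
      fix j assume j: "Suc s \<le> j \<and> j \<le> u"
      then have "\<not> P j" using min[of j] j0u by simp
      then show "mnorm (A j - A (Suc s)) < eps" using j ut unfolding P_def by auto
    qed
    have split: "mprod A s (t - s) = mprod A u (t - u) ** mprod A s (u - s)"
      using mprod_split[of A s "u - s" "t - u"] su ut by simp
    show ?thesis
    proof (cases k)
      case 0
      have "jchain A eps (Suc s) t (Suc 0)"
        unfolding jchain_def
        by (rule exI[of _ "\<lambda>l. if l = 0 then Suc s else j0"]) (use Pj0 j0s in \<open>auto simp: P_def\<close>)
      then show ?thesis using less.prems 0 by simp
    next
      case (Suc k')
      have nch: "\<not> jchain A eps (Suc u) t (Suc k')"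
      proof
        assume "jchain A eps (Suc u) t (Suc k')"
        then obtain c where c0: "c 0 = Suc u" and cm: "c (Suc k') \<le> t"
          and cl': "\<forall>l<Suc k'. c l < c (Suc l) \<and> eps \<le> mnorm (A (c (Suc l)) - A (c l))"
          unfolding jchain_def by blast
        define c' where "c' l = (if l = 0 then Suc s else c (l - 1))" for l
        have "jchain A eps (Suc s) t (Suc k)"
          unfolding jchain_def
        proof (rule exI[of _ c'], intro conjI)
          show "c' 0 = Suc s" unfolding c'_def by simp
          show "c' (Suc k) \<le> t" unfolding c'_def using cm Suc by simp
          show "\<forall>l<Suc k. c' l < c' (Suc l) \<and> eps \<le> mnorm (A (c' (Suc l)) - A (c' l))"
          proof (intro allI impI)
            fix l assume l: "l < Suc k"
            show "c' l < c' (Suc l) \<and> eps \<le> mnorm (A (c' (Suc l)) - A (c' l))"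
            proof (cases l)
              case 0
              then show ?thesis unfolding c'_def using c0 j0u Pj0 su unfolding P_def by auto
            next
              case (Suc l')
              then show ?thesis unfolding c'_def using cl' l \<open>k = Suc k'\<close> by auto
            qed
          qed
        qed
        then show False using less.prems by simp
      qed
      have IH: "mnorm (mprod A u (t - u)) \<le> C^(Suc k') * rho^(t-u)"
        using less.IH[of k' u] Suc ut nch by simp
      have B2: "mnorm (mprod A s (u - s)) \<le> C * rho^(u-s)" by (rule blk[OF su cl])
      have "mnorm (mprod A s (t - s)) \<le> mnorm (mprod A u (t - u)) * mnorm (mprod A s (u - s))"
        unfolding split by (rule mnorm_mult)
      also have "\<dots> \<le> (C^(Suc k') * rho^(t-u)) * (C * rho^(u-s))"
        using IH B2 C1 rho0 by (intro mult_mono mnorm_ge0) auto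
      also have "\<dots> = C^(Suc k) * rho^(t-s)"
        using Suc su ut by (simp add: power_add[symmetric] mult_ac)
      finally show ?thesis .
    qed
  qed
qed



lemma spec_rad_mnorm: "spec_rad (B::real^'n^'n) \<le> real CARD('n) * real CARD('n) * mnorm B"
  using spec_rad_le[of B] Nm_toM[of B] Nm_toM_le[of B] by simp

theorem lemmaC8:
  fixes p Astar rho0 rho :: real
  assumes "p \<ge> 1" and "rho0 < 1" and "rho > rho0"
  shows "\<exists>K. \<forall>A :: nat \<Rightarrow> real^'n^'n.
           (\<forall>i\<ge>1. mnorm (A i) \<le> Astar) \<and>
           (SUP i\<in>{1..}. spec_rad (A i)) = rho0 \<and>
           pvar p A \<le> ereal Astar
           \<longrightarrow> (\<forall>s t :: nat. s < t \<longrightarrow> mnorm (mprod A s (t - s)) \<le> K * rho ^ (t - s))"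
proof -
  let ?n = "CARD('n)"
  have hyp: "spec_rad (A i) \<le> rho0 \<and> 0 \<le> Astar"
    if H: "(\<forall>i\<ge>1. mnorm (A i) \<le> Astar) \<and> (SUP i\<in>{1..}. spec_rad (A i)) = rho0" and i: "1 \<le> i"
    for A :: "nat \<Rightarrow> real^'n^'n" and i
  proof -
    have bdd: "bdd_above ((\<lambda>i. spec_rad (A i)) ` {1..})"
    proof (rule bdd_aboveI[where M="real ?n * real ?n * Astar"])
      fix x assume "x \<in> (\<lambda>i. spec_rad (A i)) ` {1..}"
      then obtain j where j: "1 \<le> j" and x: "x = spec_rad (A j)" by auto
      have "x \<le> real ?n * real ?n * mnorm (A j)" using x spec_rad_mnorm by simp
      also have "\<dots> \<le> real ?n * real ?n * Astar" using H j by (intro mult_left_mono) auto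
      finally show "x \<le> real ?n * real ?n * Astar" .
    qed
    have "spec_rad (A i) \<le> (SUP i\<in>{1..}. spec_rad (A i))" by (rule cSUP_upper) (use i bdd in auto)
    moreover have "0 \<le> Astar" using H mnorm_ge0[of "A 1"] by (meson order_trans order_refl)
    ultimately show ?thesis using H by simp
  qed
  show ?thesis
  proof (cases "rho \<le> 0")
    case True
    show ?thesis
    proof (rule exI[of _ 0], rule allI, rule impI)
      fix A :: "nat \<Rightarrow> real^'n^'n"
      assume H: "(\<forall>i\<ge>1. mnorm (A i) \<le> Astar) \<and> (SUP i\<in>{1..}. spec_rad (A i)) = rho0 \<and> pvar p A \<le> ereal Astar"
      have "spec_rad (A 1) \<le> rho0" using hyp[of A 1] H by auto
      then have False using spec_rad_nonneg[of "A 1"] assms(3) True by linarith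
      then show "\<forall>s t. s < t \<longrightarrow> mnorm (mprod A s (t - s)) \<le> 0 * rho ^ (t - s)" by simp
    qed
  next
    case False
    define r0 where "r0 = max rho0 0"
    have r0: "0 \<le> r0" "r0 < rho" using False assms(3) unfolding r0_def by auto
    define r1 where "r1 = (r0 + rho) / 2"
    have r01: "r0 < r1" "r1 < rho" "0 \<le> r1" using r0 unfolding r1_def by auto
    obtain C where C1: "1 \<le> C" and U: "\<forall>B::real^'n^'n. mnorm B \<le> Astar \<and> spec_rad B \<le> r0
        \<longrightarrow> (\<forall>m. mnorm (mpow B m) \<le> C * r1^m)"
      using unif[OF r0(1) r01(1), of Astar] by auto
    define eps where "eps = (rho - r1) / C"
    have eps: "0 < eps" "r1 + C * eps \<le> rho" using C1 r01 unfolding eps_def by auto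
    define k where "k = nat \<lceil>(max Astar 0) powr p / eps powr p\<rceil>"
    show ?thesis
    proof (rule exI[of _ "C^Suc k"], rule allI, rule impI)
      fix A :: "nat \<Rightarrow> real^'n^'n"
      assume H: "(\<forall>i\<ge>1. mnorm (A i) \<le> Astar) \<and> (SUP i\<in>{1..}. spec_rad (A i)) = rho0 \<and> pvar p A \<le> ereal Astar"
      have HA: "\<forall>i\<ge>1. \<forall>m. mnorm (mpow (A i) m) \<le> C * r1^m"
      proof (intro allI impI)
        fix i m :: nat assume i: "1 \<le> i"
        have "spec_rad (A i) \<le> r0" using hyp[of A i] H i unfolding r0_def by auto
        moreover have "mnorm (A i) \<le> Astar" using H i by auto
        ultimately show "mnorm (mpow (A i) m) \<le> C * r1^m" using U by blast
      qed
      have A0: "0 \<le> Astar" using hyp[of A 1] H by auto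
      show "\<forall>s t. s < t \<longrightarrow> mnorm (mprod A s (t - s)) \<le> C^Suc k * rho ^ (t - s)"
      proof (intro allI impI)
        fix s t :: nat assume st: "s < t"
        have nch: "\<not> jchain A eps (Suc s) t (Suc k)"
        proof
          assume ch: "jchain A eps (Suc s) t (Suc k)"
          have c1: "real (Suc k) * eps powr p \<le> Astar powr p"
            by (rule chain_bound[OF assms(1) _ eps(1) ch]) (use H in auto)
          have "Astar powr p / eps powr p \<le> real k"
            unfolding k_def using A0 real_nat_ceiling_ge by simp
          then have c2: "Astar powr p \<le> real k * eps powr p"
            using eps(1) by (simp add: divide_le_eq)
          have "0 < eps powr p" using eps(1) by simp
          moreover have "real (Suc k) * eps powr p = eps powr p + real k * eps powr p"
            by (simp add: algebra_simps)
          ultimately show False using c1 c2 by linarith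
        qed
        show "mnorm (mprod A s (t - s)) \<le> C^Suc k * rho ^ (t - s)"
          by (rule block[OF HA C1 r01(3) eps(1) eps(2) st nch])
      qed
    qed
  qed
qed


end
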